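(* Let $X$ be the vertex set of a dual polar graph of diameter $d$ with distance $\partial$ and base vertex $u_0\in X$. Let $x,y\in X$, $U=x\cap y$, $\ell=\dim(u_0\cap U)$, and $X'=\{z\in X: U\subseteq z\}$. Then the pointwise product satisfies \[ f_xf_y=\sum_{\substack{z\in X'\\ f_x(z)=f_y(z)=1}} f_z\ \in\ \mathrm{Hom}_{d-\ell}(X). \]
   Context: Let $V$ be a finite-dimensional vector space over a finite field with a non-degenerate alternating, Hermitian, or quadratic form of Witt index $d$; $X$ is the set of maximal totally isotropic subspaces (dimension $d$), adjacent iff their intersection has dimension $d-1$, with distance $\partial(x,y)=d-\dim(x\cap y)$. Shells: $X_j=\{z\in X:\partial(u_0,z)=j\}$. For $z\in X$, $f_z:X\to\mathbb{R}$ is defined by $f_z(w)=1$ if $\partial(u_0,z)+\partial(z,w)=\partial(u_0,w)$ and $f_z(w)=0$ otherwise. $\mathrm{Hom}_j(X)=\mathrm{span}\{f_z : z\in X_j\}$. *)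

theory Defs
  imports "HOL-Analysis.Analysis"
begin

definition field_involution :: "('a::field \<Rightarrow> 'a) \<Rightarrow> bool" where
  "field_involution \<sigma> \<longleftrightarrow>
     (\<forall>x y. \<sigma> (x + y) = \<sigma> x + \<sigma> y) \<and> (\<forall>x y. \<sigma> (x * y) = \<sigma> x * \<sigma> y) \<and>
     (\<forall>x. \<sigma> (\<sigma> x) = x) \<and> \<sigma> \<noteq> id"

definition alternating_form :: "('a::field ^ 'n \<Rightarrow> 'a ^ 'n \<Rightarrow> 'a) \<Rightarrow> bool" where
  "alternating_form B \<longleftrightarrow>
     (\<forall>x y z. B (x + y) z = B x z + B y z) \<and> (\<forall>c x y. B (c *s x) y = c * B x y) \<and>
     (\<forall>x y z. B x (y + z) = B x y + B x z) \<and> (\<forall>c x y. B x (c *s y) = c * B x y) \<and>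
     (\<forall>x. B x x = 0) \<and>
     (\<forall>x. (\<forall>y. B x y = 0) \<longrightarrow> x = 0)"

definition hermitian_form :: "('a::field \<Rightarrow> 'a) \<Rightarrow> ('a ^ 'n \<Rightarrow> 'a ^ 'n \<Rightarrow> 'a) \<Rightarrow> bool" where
  "hermitian_form \<sigma> B \<longleftrightarrow> field_involution \<sigma> \<and>
     (\<forall>x y z. B (x + y) z = B x z + B y z) \<and> (\<forall>c x y. B (c *s x) y = c * B x y) \<and>
     (\<forall>x y. B y x = \<sigma> (B x y)) \<and>
     (\<forall>x. (\<forall>y. B x y = 0) \<longrightarrow> x = 0)"

definition quadratic_form :: "('a::field ^ 'n \<Rightarrow> 'a) \<Rightarrow> bool" where
  "quadratic_form Q \<longleftrightarrow>
     (\<forall>c x. Q (c *s x) = c ^ 2 * Q x) \<and>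
     (let B = (\<lambda>x y. Q (x + y) - Q x - Q y) in
        (\<forall>x y z. B (x + y) z = B x z + B y z) \<and> (\<forall>c x y. B (c *s x) y = c * B x y) \<and>
        (\<forall>x y z. B x (y + z) = B x y + B x z) \<and> (\<forall>c x y. B x (c *s y) = c * B x y) \<and>
        (\<forall>x. Q x = 0 \<and> (\<forall>y. B x y = 0) \<longrightarrow> x = 0))"

text \<open>A predicate TI on subsets of V is the "totally isotropic" predicate of a
non-degenerate alternating, Hermitian or quadratic form.\<close>
definition polar_isotropy :: "(('a::field ^ 'n) set \<Rightarrow> bool) \<Rightarrow> bool" where
  "polar_isotropy TI \<longleftrightarrow>
     (\<exists>B. alternating_form B \<and> TI = (\<lambda>W. \<forall>x\<in>W. \<forall>y\<in>W. B x y = 0)) \<or>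
     (\<exists>\<sigma> B. hermitian_form \<sigma> B \<and> TI = (\<lambda>W. \<forall>x\<in>W. \<forall>y\<in>W. B x y = 0)) \<or>
     (\<exists>Q. quadratic_form Q \<and> TI = (\<lambda>W. \<forall>x\<in>W. Q x = 0))"

definition ti_subspaces :: "(('a::field ^ 'n) set \<Rightarrow> bool) \<Rightarrow> ('a ^ 'n) set set" where
  "ti_subspaces TI = {W. vec.subspace W \<and> TI W}"

definition witt_index :: "(('a::field ^ 'n) set \<Rightarrow> bool) \<Rightarrow> nat" where
  "witt_index TI = Max (vec.dim ` ti_subspaces TI)"

definition dpX :: "(('a::field ^ 'n) set \<Rightarrow> bool) \<Rightarrow> ('a ^ 'n) set set" where
  "dpX TI = {W \<in> ti_subspaces TI. vec.dim W = witt_index TI}"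

definition dpdist :: "(('a::field ^ 'n) set \<Rightarrow> bool) \<Rightarrow> ('a ^ 'n) set \<Rightarrow> ('a ^ 'n) set \<Rightarrow> nat" where
  "dpdist TI x y = witt_index TI - vec.dim (x \<inter> y)"

definition dpshell :: "(('a::field ^ 'n) set \<Rightarrow> bool) \<Rightarrow> ('a ^ 'n) set \<Rightarrow> nat \<Rightarrow> ('a ^ 'n) set set" where
  "dpshell TI u0 j = {z \<in> dpX TI. dpdist TI u0 z = j}"

definition dpf :: "(('a::field ^ 'n) set \<Rightarrow> bool) \<Rightarrow> ('a ^ 'n) set \<Rightarrow> ('a ^ 'n) set \<Rightarrow> ('a ^ 'n) set \<Rightarrow> real" where
  "dpf TI u0 z w = (if dpdist TI u0 z + dpdist TI z w = dpdist TI u0 w then 1 else 0)"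

text \<open>Hom_j(X): the real span of the f_z (z in X_j), as functions on X
(X is finite, so the span is the set of finite linear combinations over X_j;
functions are compared on X only).\<close>
definition dpHom :: "(('a::field ^ 'n) set \<Rightarrow> bool) \<Rightarrow> ('a ^ 'n) set \<Rightarrow> nat \<Rightarrow> (('a ^ 'n) set \<Rightarrow> real) set" where
  "dpHom TI u0 j = {g. \<exists>c. \<forall>w \<in> dpX TI. g w = (\<Sum>z \<in> dpshell TI u0 j. c z * dpf TI u0 z w)}"

end

theory Submission
  imports Defs
begin


definition ssum :: "('a::field ^ 'n) set \<Rightarrow> ('a ^ 'n) set \<Rightarrow> ('a ^ 'n) set" where
  "ssum A B = {x + y |x y. x \<in> A \<and> y \<in> B}"

definition goodP :: "(('a::field ^ 'n) set \<Rightarrow> bool) \<Rightarrow> ('a ^ 'n \<Rightarrow> 'a ^ 'n \<Rightarrow> 'a) \<Rightarrow> bool" where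
 "goodP TI P \<longleftrightarrow> (\<forall>x y z. P (x+y) z = P x z + P y z) \<and> (\<forall>c x y. P (c *s x) y = c * P x y)
   \<and> (\<forall>x y. P x y = 0 \<longleftrightarrow> P y x = 0)
   \<and> (\<forall>W. vec.subspace W \<and> TI W \<longrightarrow> (\<forall>x\<in>W. \<forall>y\<in>W. P x y = 0))
   \<and> (\<forall>W V. W \<subseteq> V \<and> TI V \<longrightarrow> TI W)
   \<and> (\<forall>A D. vec.subspace A \<and> vec.subspace D \<and> TI A \<and> TI D \<and> (\<forall>a\<in>A. \<forall>d\<in>D. P a d = 0)
          \<longrightarrow> TI (ssum A D))"

lemma alt_good:
  assumes "alternating_form B"
  shows "goodP (\<lambda>W. \<forall>x\<in>W. \<forall>y\<in>W. B x y = 0) B"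
proof -
  note AF = assms[unfolded alternating_form_def]
  have l1: "B (x+y) z = B x z + B y z" "B x (y+z) = B x y + B x z" for x y z
    using AF[THEN conjunct1] AF[THEN conjunct2, THEN conjunct2, THEN conjunct1] by blast+
  have l0: "B x x = 0" for x
    using AF[THEN conjunct2, THEN conjunct2, THEN conjunct2, THEN conjunct2, THEN conjunct1] by blast
  have sk: "B y x = - B x y" for x y
  proof -
    have "0 = B (x+y) (x+y)" using l0 by simp
    also have "\<dots> = B x x + B x y + (B y x + B y y)" by (simp add: l1)
    finally have "B x y + B y x = 0" using l0 by simp
    then show ?thesis by (simp add: eq_neg_iff_add_eq_0 add.commute)
  qed
  have sym: "B x y = 0 \<longleftrightarrow> B y x = 0" for x y using sk[of x y] by auto
  have sumTI: "\<forall>s\<in>ssum A D. \<forall>t\<in>ssum A D. B s t = 0"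
    if "\<forall>x\<in>A. \<forall>y\<in>A. B x y = 0" "\<forall>x\<in>D. \<forall>y\<in>D. B x y = 0" "\<forall>a\<in>A. \<forall>d\<in>D. B a d = 0" for A D
  proof (intro ballI)
    fix s t assume "s \<in> ssum A D" "t \<in> ssum A D"
    then obtain a b a' b' where "s = a + b" "t = a' + b'" "a \<in> A" "b \<in> D" "a' \<in> A" "b' \<in> D"
      unfolding ssum_def by auto
    then show "B s t = 0" using that sym[of b a'] by (simp add: l1)
  qed
  have sc: "B (c *s x) y = c * B x y" for c x y using AF[THEN conjunct2, THEN conjunct1] by blast
  show ?thesis unfolding goodP_def
  proof (intro conjI allI impI)
    show "\<forall>x\<in>W. \<forall>y\<in>W. B x y = 0" if "vec.subspace W \<and> (\<forall>x\<in>W. \<forall>y\<in>W. B x y = 0)" for W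
      using that by blast
    show "\<forall>x\<in>W. \<forall>y\<in>W. B x y = 0" if "W \<subseteq> V \<and> (\<forall>x\<in>V. \<forall>y\<in>V. B x y = 0)" for W V
      using that by blast
    show "B (x + y) z = B x z + B y z" for x y z by (rule l1)
    show "B (c *s x) y = c * B x y" for c x y by (rule sc)
    show "B x y = 0 \<longleftrightarrow> B y x = 0" for x y by (rule sym)
    show "\<forall>x\<in>ssum A D. \<forall>y\<in>ssum A D. B x y = 0"
      if "vec.subspace A \<and> vec.subspace D \<and> (\<forall>x\<in>A. \<forall>y\<in>A. B x y = 0) \<and> (\<forall>x\<in>D. \<forall>y\<in>D. B x y = 0) \<and> (\<forall>a\<in>A. \<forall>d\<in>D. B a d = 0)" for A D
      using sumTI[of A D] that by blast
  qed
qed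

lemma herm_good:
  assumes "hermitian_form \<sigma> B"
  shows "goodP (\<lambda>W. \<forall>x\<in>W. \<forall>y\<in>W. B x y = 0) B"
proof -
  note HF = assms[unfolded hermitian_form_def]
  have inv: "field_involution \<sigma>" using HF by blast
  note FI = inv[unfolded field_involution_def]
  have sadd: "\<sigma> (a + b) = \<sigma> a + \<sigma> b" for a b using FI[THEN conjunct1] by blast
  have s0: "\<sigma> 0 = 0" using sadd[of 0 0] by (metis add_cancel_right_right)
  have ss: "\<sigma> (\<sigma> a) = a" for a using FI[THEN conjunct2, THEN conjunct2, THEN conjunct1] by blast
  have l1: "B (x+y) z = B x z + B y z" for x y z
    using HF[THEN conjunct2, THEN conjunct1] by blast
  have hs: "B y x = \<sigma> (B x y)" for x y using HF[THEN conjunct2, THEN conjunct2, THEN conjunct2, THEN conjunct1] by blast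
  have l2: "B x (y+z) = B x y + B x z" for x y z
    by (metis hs l1 sadd)
  have sym: "B x y = 0 \<longleftrightarrow> B y x = 0" for x y by (metis hs s0 ss)
  have sumTI: "\<forall>s\<in>ssum A D. \<forall>t\<in>ssum A D. B s t = 0"
    if "\<forall>x\<in>A. \<forall>y\<in>A. B x y = 0" "\<forall>x\<in>D. \<forall>y\<in>D. B x y = 0" "\<forall>a\<in>A. \<forall>d\<in>D. B a d = 0" for A D
  proof (intro ballI)
    fix s t assume "s \<in> ssum A D" "t \<in> ssum A D"
    then obtain a b a' b' where "s = a + b" "t = a' + b'" "a \<in> A" "b \<in> D" "a' \<in> A" "b' \<in> D"
      unfolding ssum_def by auto
    then show "B s t = 0" using that sym[of b a'] by (simp add: l1 l2)
  qed
  have sc: "B (c *s x) y = c * B x y" for c x y using HF[THEN conjunct2, THEN conjunct2, THEN conjunct1] by blast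
  show ?thesis unfolding goodP_def
  proof (intro conjI allI impI)
    show "\<forall>x\<in>W. \<forall>y\<in>W. B x y = 0" if "vec.subspace W \<and> (\<forall>x\<in>W. \<forall>y\<in>W. B x y = 0)" for W
      using that by blast
    show "\<forall>x\<in>W. \<forall>y\<in>W. B x y = 0" if "W \<subseteq> V \<and> (\<forall>x\<in>V. \<forall>y\<in>V. B x y = 0)" for W V
      using that by blast
    show "B (x + y) z = B x z + B y z" for x y z by (rule l1)
    show "B (c *s x) y = c * B x y" for c x y by (rule sc)
    show "B x y = 0 \<longleftrightarrow> B y x = 0" for x y by (rule sym)
    show "\<forall>x\<in>ssum A D. \<forall>y\<in>ssum A D. B x y = 0"
      if "vec.subspace A \<and> vec.subspace D \<and> (\<forall>x\<in>A. \<forall>y\<in>A. B x y = 0) \<and> (\<forall>x\<in>D. \<forall>y\<in>D. B x y = 0) \<and> (\<forall>a\<in>A. \<forall>d\<in>D. B a d = 0)" for A D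
      using sumTI[of A D] that by blast
  qed
qed

lemma quad_good:
  assumes "quadratic_form Q"
  shows "goodP (\<lambda>W. \<forall>x\<in>W. Q x = 0) (\<lambda>x y. Q (x + y) - Q x - Q y)"
proof -
  let ?P = "\<lambda>x y. Q (x + y) - Q x - Q y"
  have l1: "?P (x+y) z = ?P x z + ?P y z" "?P (c *s x) y = c * ?P x y" for x y z c
    using assms[unfolded quadratic_form_def Let_def, THEN conjunct2, THEN conjunct1]
      assms[unfolded quadratic_form_def Let_def, THEN conjunct2, THEN conjunct2, THEN conjunct1] by blast+
  have sym: "?P x y = 0 \<longleftrightarrow> ?P y x = 0" for x y by (simp add: algebra_simps)
  have sub: "\<forall>x\<in>W. \<forall>y\<in>W. ?P x y = 0" if "vec.subspace W" "\<forall>x\<in>W. Q x = 0" for W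
  proof (intro ballI)
    fix x y assume "x \<in> W" "y \<in> W"
    then have "x + y \<in> W" using that(1) vec.subspace_add by blast
    then show "?P x y = 0" using that(2) \<open>x \<in> W\<close> \<open>y \<in> W\<close> by simp
  qed
  have sumTI: "\<forall>s\<in>ssum A D. Q s = 0"
    if "\<forall>x\<in>A. Q x = 0" "\<forall>x\<in>D. Q x = 0" "\<forall>a\<in>A. \<forall>d\<in>D. ?P a d = 0" for A D
  proof (intro ballI)
    fix s assume "s \<in> ssum A D"
    then obtain a b where "s = a + b" "a \<in> A" "b \<in> D" unfolding ssum_def by auto
    then have "?P a b = 0" "Q a = 0" "Q b = 0" using that by auto
    then show "Q s = 0" using \<open>s = a + b\<close> by (simp add: algebra_simps)
  qed
  show ?thesis unfolding goodP_def
  proof (intro conjI allI impI)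
    show "\<forall>x\<in>W. Q x = 0" if "W \<subseteq> V \<and> (\<forall>x\<in>V. Q x = 0)" for W V
      using that by blast
    show "?P (x + y) z = ?P x z + ?P y z" for x y z by (rule l1)
    show "?P (c *s x) y = c * ?P x y" for c x y by (rule l1)
    show "?P x y = 0 \<longleftrightarrow> ?P y x = 0" for x y by (rule sym)
    show "\<forall>x\<in>W. \<forall>y\<in>W. ?P x y = 0" if "vec.subspace W \<and> (\<forall>x\<in>W. Q x = 0)" for W
      using sub[of W] that by blast
    show "\<forall>x\<in>ssum A D. Q x = 0"
      if "vec.subspace A \<and> vec.subspace D \<and> (\<forall>x\<in>A. Q x = 0) \<and> (\<forall>x\<in>D. Q x = 0) \<and> (\<forall>a\<in>A. \<forall>d\<in>D. ?P a d = 0)" for A D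
      using sumTI[of A D] that by blast
  qed
qed

lemma polar_good: "polar_isotropy TI \<Longrightarrow> \<exists>P. goodP TI P"
  unfolding polar_isotropy_def using alt_good herm_good quad_good by blast



locale dpg =
  fixes TI :: "('a::field ^ 'n::finite) set \<Rightarrow> bool" and P :: "'a ^ 'n \<Rightarrow> 'a ^ 'n \<Rightarrow> 'a"
  assumes good: "goodP TI P"
begin

lemma Padd: "P (x+y) z = P x z + P y z" using good[unfolded goodP_def, THEN conjunct1] by blast
lemma Pscal: "P (c *s x) y = c * P x y" using good[unfolded goodP_def, THEN conjunct2, THEN conjunct1] by blast
lemma Psym: "P x y = 0 \<longleftrightarrow> P y x = 0" using good[unfolded goodP_def, THEN conjunct2, THEN conjunct2, THEN conjunct1] by blast
lemma TIz: "vec.subspace W \<Longrightarrow> TI W \<Longrightarrow> x \<in> W \<Longrightarrow> y \<in> W \<Longrightarrow> P x y = 0"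
  using good[unfolded goodP_def, THEN conjunct2, THEN conjunct2, THEN conjunct2, THEN conjunct1] by blast
lemma TIsub: "W \<subseteq> V \<Longrightarrow> TI V \<Longrightarrow> TI W"
  using good[unfolded goodP_def, THEN conjunct2, THEN conjunct2, THEN conjunct2, THEN conjunct2, THEN conjunct1] by blast
lemma TIsum: "vec.subspace A \<Longrightarrow> vec.subspace D \<Longrightarrow> TI A \<Longrightarrow> TI D \<Longrightarrow> (\<forall>a\<in>A. \<forall>d\<in>D. P a d = 0)
   \<Longrightarrow> TI (ssum A D)"
  using good[unfolded goodP_def, THEN conjunct2, THEN conjunct2, THEN conjunct2, THEN conjunct2, THEN conjunct2] by blast
lemma P0: "P 0 c = 0" using Pscal[of 0 0 c] by simp

definition perp :: "('a ^ 'n) set \<Rightarrow> ('a ^ 'n) set" where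
  "perp C = {v. \<forall>c\<in>C. P v c = 0}"

lemma perp_subspace: "vec.subspace (perp C)"
  unfolding vec.subspace_def perp_def by (auto simp: Padd Pscal P0)

lemma ssum_subspace: "vec.subspace A \<Longrightarrow> vec.subspace B \<Longrightarrow> vec.subspace (ssum A B)"
  unfolding ssum_def by (rule vec.subspace_sums)

lemma dim_hyper:
  assumes T: "vec.subspace T"
  shows "vec.dim T \<le> vec.dim (T \<inter> perp {c}) + 1"
proof (cases "T \<subseteq> perp {c}")
  case True
  then have "T \<inter> perp {c} = T" by auto
  then show ?thesis by simp
next
  case False
  then obtain s where s: "s \<in> T" "P s c \<noteq> 0" unfolding perp_def by auto
  let ?H = "T \<inter> perp {c}"
  have "T \<subseteq> vec.span (insert s ?H)"
  proof
    fix v assume v: "v \<in> T"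
    define k where "k = P v c / P s c"
    have "P (v + (-k) *s s) c = P v c + (-k) * P s c" by (simp only: Padd Pscal)
    also have "\<dots> = 0" using s(2) by (simp add: k_def)
    finally have pz: "P (v + (-k) *s s) c = 0" .
    have "v + (-k) *s s \<in> T" by (intro vec.subspace_add[OF T v] vec.subspace_scale[OF T s(1)])
    then have "v + (-k) *s s \<in> ?H" using pz unfolding perp_def by simp
    moreover have "v = (v + (-k) *s s) + k *s s" by (simp add: vec_eq_iff algebra_simps)
    ultimately show "v \<in> vec.span (insert s ?H)"
      by (metis insertI1 insertI2 vec.span_add vec.span_base vec.span_scale)
  qed
  then have "vec.dim T \<le> vec.dim (insert s ?H)" by (rule vec.dim_mono)
  also have "\<dots> \<le> vec.dim ?H + 1"
    by (simp add: vec.dim_insert)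
  finally show ?thesis .
qed

lemma dim_perp:
  assumes "finite C" "vec.subspace T"
  shows "vec.dim T \<le> vec.dim (T \<inter> perp C) + card C"
  using assms(1)
proof (induction C rule: finite_induct)
  case empty
  then show ?case by (simp add: perp_def)
next
  case (insert c C)
  have sS: "vec.subspace (T \<inter> perp C)"
    using assms(2) perp_subspace vec.subspace_inter by blast
  have "vec.dim (T \<inter> perp C) \<le> vec.dim ((T \<inter> perp C) \<inter> perp {c}) + 1"
    by (rule dim_hyper[OF sS])
  moreover have "(T \<inter> perp C) \<inter> perp {c} = T \<inter> perp (insert c C)"
    unfolding perp_def by auto
  ultimately show ?case using insert by simp
qed

lemma witt_ge:
  assumes "vec.subspace W" "TI W"
  shows "vec.dim W \<le> witt_index TI"
proof -
  have "finite (vec.dim ` ti_subspaces TI)"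
    by (rule finite_subset[of _ "{..vec.dim (UNIV::('a^'n) set)}"]) (auto simp del: vec.dim_UNIV intro: vec.dim_subset)
  moreover have "vec.dim W \<in> vec.dim ` ti_subspaces TI"
    using assms unfolding ti_subspaces_def by auto
  ultimately show ?thesis unfolding witt_index_def by (rule Max_ge)
qed

lemma dpX_D:
  assumes "z \<in> dpX TI"
  shows "vec.subspace z" "TI z" "vec.dim z = witt_index TI"
  using assms unfolding dpX_def ti_subspaces_def by auto

lemma geo_char:
  assumes p: "p \<in> dpX TI" and q: "q \<in> dpX TI" and r: "r \<in> dpX TI"
  shows "dpdist TI p r \<le> dpdist TI p q + dpdist TI q r"
    and "dpdist TI p q + dpdist TI q r = dpdist TI p r \<longleftrightarrow> p \<inter> r \<subseteq> q \<and> q = ssum (p \<inter> q) (q \<inter> r)"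
proof -
  note sp = dpX_D[OF p] and sq = dpX_D[OF q] and sr = dpX_D[OF r]
  let ?d = "witt_index TI"
  let ?M = "ssum (p \<inter> q) (q \<inter> r)"
  have spq: "vec.subspace (p \<inter> q)" using sp sq vec.subspace_inter by blast
  have sqr: "vec.subspace (q \<inter> r)" using sr sq vec.subspace_inter by blast
  have spr: "vec.subspace (p \<inter> r)" using sp sr vec.subspace_inter by blast
  have spqr: "vec.subspace (p \<inter> q \<inter> r)" using spq sr vec.subspace_inter by blast
  have sM: "vec.subspace ?M" using ssum_subspace[OF spq sqr] .
  have Mq: "?M \<subseteq> q" unfolding ssum_def using vec.subspace_add[OF sq(1)] by auto
  have mod: "vec.dim ?M + vec.dim (p \<inter> q \<inter> r) = vec.dim (p \<inter> q) + vec.dim (q \<inter> r)"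
  proof -
    have "(p \<inter> q) \<inter> (q \<inter> r) = p \<inter> q \<inter> r" by auto
    then show ?thesis using vec.dim_sums_Int[OF spq sqr] unfolding ssum_def by simp
  qed
  have dM: "vec.dim ?M \<le> ?d" using vec.dim_subset[OF Mq] sq(3) by simp
  have d3: "vec.dim (p \<inter> q \<inter> r) \<le> vec.dim (p \<inter> r)" by (rule vec.dim_subset) auto
  have dpq: "vec.dim (p \<inter> q) \<le> ?d" using vec.dim_subset[of "p \<inter> q" p] sp(3) by auto
  have dqr: "vec.dim (q \<inter> r) \<le> ?d" using vec.dim_subset[of "q \<inter> r" q] sq(3) by auto
  have dpr: "vec.dim (p \<inter> r) \<le> ?d" using vec.dim_subset[of "p \<inter> r" p] sp(3) by auto
  show "dpdist TI p r \<le> dpdist TI p q + dpdist TI q r"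
    unfolding dpdist_def using mod dM d3 dpq dqr dpr by linarith
  have e1: "vec.dim ?M = ?d \<longleftrightarrow> q = ?M"
    using vec.subspace_dim_equal[OF sM sq(1) Mq] sq(3) by auto
  have e2: "vec.dim (p \<inter> q \<inter> r) = vec.dim (p \<inter> r) \<longleftrightarrow> p \<inter> r \<subseteq> q"
  proof
    assume "vec.dim (p \<inter> q \<inter> r) = vec.dim (p \<inter> r)"
    then have "p \<inter> q \<inter> r = p \<inter> r" using vec.subspace_dim_equal[OF spqr spr] by auto
    then show "p \<inter> r \<subseteq> q" by auto
  next
    assume "p \<inter> r \<subseteq> q"
    then have "p \<inter> q \<inter> r = p \<inter> r" by auto
    then show "vec.dim (p \<inter> q \<inter> r) = vec.dim (p \<inter> r)" by simp
  qed
  show "dpdist TI p q + dpdist TI q r = dpdist TI p r \<longleftrightarrow> p \<inter> r \<subseteq> q \<and> q = ?M"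
  proof -
    have ar: "dpdist TI p q + dpdist TI q r = dpdist TI p r \<longleftrightarrow>
       (vec.dim ?M = ?d \<and> vec.dim (p \<inter> q \<inter> r) = vec.dim (p \<inter> r))"
      unfolding dpdist_def using mod dM d3 dpq dqr dpr by (intro iffI conjI) linarith+
    show ?thesis unfolding ar e1 e2 by blast
  qed
qed

lemma f_char:
  assumes "u \<in> dpX TI" "x \<in> dpX TI" "z \<in> dpX TI"
  shows "dpf TI u x z = 1 \<longleftrightarrow> u \<inter> z \<subseteq> x \<and> x = ssum (u \<inter> x) (x \<inter> z)"
proof -
  have e: "dpf TI u x z = 1 \<longleftrightarrow> dpdist TI u x + dpdist TI x z = dpdist TI u z"
    unfolding dpf_def by simp
  show ?thesis by (rule trans[OF e geo_char(2)[OF assms]])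
qed

lemma f_trans:
  assumes "u \<in> dpX TI" "x \<in> dpX TI" "z \<in> dpX TI" "w \<in> dpX TI"
    and "dpf TI u x z = 1" "dpf TI u z w = 1"
  shows "dpf TI u x w = 1"
proof -
  have a: "dpdist TI u x + dpdist TI x z = dpdist TI u z" using assms(5) unfolding dpf_def
    by (simp split: if_splits)
  have b: "dpdist TI u z + dpdist TI z w = dpdist TI u w" using assms(6) unfolding dpf_def
    by (simp split: if_splits)
  have c: "dpdist TI x w \<le> dpdist TI x z + dpdist TI z w" using geo_char(1)[OF assms(2,3,4)] .
  have d: "dpdist TI u w \<le> dpdist TI u x + dpdist TI x w" using geo_char(1)[OF assms(1,2,4)] .
  have "dpdist TI u x + dpdist TI x w = dpdist TI u w" using a b c d by linarith
  then show ?thesis unfolding dpf_def by simp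
qed

end


lemma ssumI: "a \<in> A \<Longrightarrow> b \<in> B \<Longrightarrow> a + b \<in> ssum A B"
  unfolding ssum_def by blast
lemma ssumE: "v \<in> ssum A B \<Longrightarrow> (\<And>a b. v = a + b \<Longrightarrow> a \<in> A \<Longrightarrow> b \<in> B \<Longrightarrow> thesis) \<Longrightarrow> thesis"
  unfolding ssum_def by blast
lemma ssumI2: "b \<in> B \<Longrightarrow> (0::'a::field^'n) \<in> A \<Longrightarrow> b \<in> ssum A B"
  using ssumI[of 0 A b B] by simp
lemma ssumI1: "a \<in> A \<Longrightarrow> (0::'a::field^'n) \<in> B \<Longrightarrow> a \<in> ssum A B"
  using ssumI[of a A 0 B] by simp

context dpg begin

lemma z0_in:
  assumes u: "u \<in> dpX TI" and w: "w \<in> dpX TI" and A: "vec.subspace A" "A \<subseteq> u"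
  shows "ssum A (w \<inter> perp A) \<in> dpX TI"
proof -
  note su = dpX_D[OF u] and sw = dpX_D[OF w]
  let ?D = "w \<inter> perp A"
  let ?z = "ssum A ?D"
  have sD: "vec.subspace ?D" using sw(1) perp_subspace vec.subspace_inter by blast
  have sz: "vec.subspace ?z" by (rule ssum_subspace[OF A(1) sD])
  have TIz0: "TI ?z"
  proof (rule TIsum[OF A(1) sD])
    show "TI A" using TIsub[OF A(2) su(2)] .
    show "TI ?D" using TIsub[of ?D w] sw(2) by blast
    show "\<forall>a\<in>A. \<forall>d\<in>?D. P a d = 0" unfolding perp_def using Psym by blast
  qed
  have le: "vec.dim ?z \<le> witt_index TI" by (rule witt_ge[OF sz TIz0])
  obtain B0 where B0: "B0 \<subseteq> A \<inter> w" "vec.independent B0" "A \<inter> w \<subseteq> vec.span B0"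
      "card B0 = vec.dim (A \<inter> w)"
    using vec.basis_exists by blast
  obtain B where B: "B0 \<subseteq> B" "B \<subseteq> A" "vec.independent B" "A \<subseteq> vec.span B"
    using vec.maximal_independent_subset_extend[of B0 A] B0(1,2) by blast
  have cardB: "card B = vec.dim A" using vec.basis_card_eq_dim[OF B(2) B(4) B(3)] .
  have finB: "finite B" using vec.finiteI_independent[OF B(3)] .
  let ?C = "B - B0"
  have cardC: "card ?C = vec.dim A - vec.dim (A \<inter> w)"
    using card_Diff_subset[OF finite_subset[OF B(1) finB] B(1)] cardB B0(4) by simp
  have sub: "w \<inter> perp ?C \<subseteq> ?D"
  proof
    fix v assume v: "v \<in> w \<inter> perp ?C"
    let ?K = "{a. P a v = 0}"
    have sK: "vec.subspace ?K" unfolding vec.subspace_def by (auto simp: Padd Pscal P0)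
    have "B \<subseteq> ?K"
    proof
      fix b assume b: "b \<in> B"
      show "b \<in> ?K"
      proof (cases "b \<in> B0")
        case True then have "b \<in> w" using B0(1) by auto
        then show ?thesis using TIz[OF sw(1) sw(2)] v by blast
      next
        case False then have "P v b = 0" using v b unfolding perp_def by auto
        then show ?thesis using Psym by auto
      qed
    qed
    then have "A \<subseteq> ?K" using B(4) vec.span_minimal[OF _ sK] by blast
    then show "v \<in> ?D" using v Psym unfolding perp_def by auto
  qed
  have "vec.dim w \<le> vec.dim (w \<inter> perp ?C) + card ?C"
    by (rule dim_perp[OF _ sw(1)]) (use finB in auto)
  also have "\<dots> \<le> vec.dim ?D + card ?C" using vec.dim_subset[OF sub] by simp
  finally have ge1: "witt_index TI \<le> vec.dim ?D + (vec.dim A - vec.dim (A \<inter> w))"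
    using sw(3) cardC by simp
  have mod: "vec.dim ?z + vec.dim (A \<inter> ?D) = vec.dim A + vec.dim ?D"
    using vec.dim_sums_Int[OF A(1) sD] unfolding ssum_def .
  have "A \<inter> w \<subseteq> perp A" unfolding perp_def using TIz[OF su(1) su(2)] A(2) by blast
  then have "A \<inter> ?D = A \<inter> w" by auto
  moreover have "vec.dim (A \<inter> w) \<le> vec.dim A" by (rule vec.dim_subset) auto
  ultimately have "witt_index TI \<le> vec.dim ?z" using ge1 mod by simp
  then have "vec.dim ?z = witt_index TI" using le by simp
  then show ?thesis unfolding dpX_def ti_subspaces_def using sz TIz0 by auto
qed

lemma geo_z0:
  assumes x: "x \<in> dpX TI" and u: "u \<in> dpX TI" and w: "w \<in> dpX TI"
    and g1: "u \<inter> w \<subseteq> x" and g2: "x = ssum (u \<inter> x) (x \<inter> w)"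
    and A: "vec.subspace A" "A \<subseteq> x" "A \<subseteq> u"
  shows "u \<inter> ssum A (w \<inter> perp A) \<subseteq> x" "x = ssum (u \<inter> x) (x \<inter> ssum A (w \<inter> perp A))"
proof -
  note sx = dpX_D[OF x] and su = dpX_D[OF u] and sw = dpX_D[OF w]
  show "u \<inter> ssum A (w \<inter> perp A) \<subseteq> x"
  proof
    fix v assume v: "v \<in> u \<inter> ssum A (w \<inter> perp A)"
    then have "v \<in> ssum A (w \<inter> perp A)" by blast
    then obtain a b where ab0: "v = a + b" "a \<in> A" "b \<in> w \<inter> perp A" by (rule ssumE)
    then have ab: "v = a + b" "a \<in> A" "b \<in> w" by auto
    have "b = v - a" using ab(1) by simp
    then have "b \<in> u" using vec.subspace_diff[OF su(1)] v ab(2) A(3) by auto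
    then have "b \<in> x" using g1 ab(3) by auto
    then show "v \<in> x" using ab vec.subspace_add[OF sx(1)] A(2) by auto
  qed
  show "x = ssum (u \<inter> x) (x \<inter> ssum A (w \<inter> perp A))"
  proof
    show "ssum (u \<inter> x) (x \<inter> ssum A (w \<inter> perp A)) \<subseteq> x"
      unfolding ssum_def using vec.subspace_add[OF sx(1)] by auto
    have xs: "x \<subseteq> ssum (u \<inter> x) (x \<inter> w)" using g2 by (rule equalityD1)
    show "x \<subseteq> ssum (u \<inter> x) (x \<inter> ssum A (w \<inter> perp A))"
    proof
      fix v assume "v \<in> x"
      then have "v \<in> ssum (u \<inter> x) (x \<inter> w)" using xs by blast
      then obtain a b where ab: "v = a + b" "a \<in> u \<inter> x" "b \<in> x \<inter> w" by (rule ssumE)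
      have "b \<in> perp A" unfolding perp_def using TIz[OF sx(1) sx(2)] A(2) ab(3) by blast
      then have "b \<in> ssum A (w \<inter> perp A)" using ab(3) vec.subspace_0[OF A(1)] by (intro ssumI2) auto
      then show "v \<in> ssum (u \<inter> x) (x \<inter> ssum A (w \<inter> perp A))"
        using ab by (auto intro: ssumI)
    qed
  qed
qed

lemma U_sub:
  assumes x: "x \<in> dpX TI" and y: "y \<in> dpX TI" and u: "u \<in> dpX TI" and w: "w \<in> dpX TI"
    and gx1: "u \<inter> w \<subseteq> x" and gx2: "x = ssum (u \<inter> x) (x \<inter> w)"
    and gy1: "u \<inter> w \<subseteq> y" and gy2: "y = ssum (u \<inter> y) (y \<inter> w)"
  shows "x \<inter> y \<subseteq> ssum (u \<inter> (x \<inter> y)) (w \<inter> perp (u \<inter> (x \<inter> y)))"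
proof
  note sx = dpX_D[OF x] and sy = dpX_D[OF y] and su = dpX_D[OF u] and sw = dpX_D[OF w]
  fix v assume v: "v \<in> x \<inter> y"
  have xs: "x \<subseteq> ssum (u \<inter> x) (x \<inter> w)" using gx2 by (rule equalityD1)
  have ys: "y \<subseteq> ssum (u \<inter> y) (y \<inter> w)" using gy2 by (rule equalityD1)
  have vx: "v \<in> ssum (u \<inter> x) (x \<inter> w)" using xs v by blast
  obtain a b where ab: "v = a + b" "a \<in> u \<inter> x" "b \<in> x \<inter> w" using vx by (rule ssumE)
  have vy: "v \<in> ssum (u \<inter> y) (y \<inter> w)" using ys v by blast
  obtain a' b' where ab': "v = a' + b'" "a' \<in> u \<inter> y" "b' \<in> y \<inter> w" using vy by (rule ssumE)
  have e: "a - a' = b' - b" using ab(1) ab'(1) by (simp add: algebra_simps)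
  have "a - a' \<in> u" using vec.subspace_diff[OF su(1)] ab(2) ab'(2) by auto
  moreover have "a - a' \<in> w" unfolding e using vec.subspace_diff[OF sw(1)] ab(3) ab'(3) by auto
  ultimately have "a - a' \<in> y" using gy1 by auto
  moreover have "a' \<in> y" using ab'(2) by auto
  ultimately have "a' + (a - a') \<in> y" using vec.subspace_add[OF sy(1)] by blast
  then have "a \<in> y" by simp
  then have aA: "a \<in> u \<inter> (x \<inter> y)" using ab(2) by auto
  have "b \<in> perp (u \<inter> (x \<inter> y))" unfolding perp_def using TIz[OF sx(1) sx(2)] ab(3) by blast
  then show "v \<in> ssum (u \<inter> (x \<inter> y)) (w \<inter> perp (u \<inter> (x \<inter> y)))"
    using ab aA by (auto intro: ssumI)
qed

lemma geo_z0w: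
  assumes u: "u \<in> dpX TI" and w: "w \<in> dpX TI" and A: "vec.subspace A" "u \<inter> w \<subseteq> A" "A \<subseteq> u"
    and z: "ssum A (w \<inter> perp A) \<in> dpX TI"
  shows "u \<inter> w \<subseteq> ssum A (w \<inter> perp A)"
    "ssum A (w \<inter> perp A) = ssum (u \<inter> ssum A (w \<inter> perp A)) (ssum A (w \<inter> perp A) \<inter> w)"
proof -
  note sz = dpX_D[OF z] and sw = dpX_D[OF w]
  have p0: "0 \<in> w \<inter> perp A" using vec.subspace_0[OF sw(1)] perp_subspace vec.subspace_0 by blast
  show "u \<inter> w \<subseteq> ssum A (w \<inter> perp A)"
    using A(2) p0 by (auto intro: ssumI1)
  show "ssum A (w \<inter> perp A) = ssum (u \<inter> ssum A (w \<inter> perp A)) (ssum A (w \<inter> perp A) \<inter> w)"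
  proof
    show "ssum (u \<inter> ssum A (w \<inter> perp A)) (ssum A (w \<inter> perp A) \<inter> w) \<subseteq> ssum A (w \<inter> perp A)"
    proof
      fix v assume "v \<in> ssum (u \<inter> ssum A (w \<inter> perp A)) (ssum A (w \<inter> perp A) \<inter> w)"
      then obtain a b where "v = a + b" "a \<in> u \<inter> ssum A (w \<inter> perp A)" "b \<in> ssum A (w \<inter> perp A) \<inter> w"
        by (rule ssumE)
      then show "v \<in> ssum A (w \<inter> perp A)" using vec.subspace_add[OF sz(1)] by auto
    qed
    show "ssum A (w \<inter> perp A) \<subseteq> ssum (u \<inter> ssum A (w \<inter> perp A)) (ssum A (w \<inter> perp A) \<inter> w)"
    proof
      fix v assume "v \<in> ssum A (w \<inter> perp A)"
      then obtain a b where ab: "v = a + b" "a \<in> A" "b \<in> w \<inter> perp A" by (rule ssumE)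
      have "a \<in> ssum A (w \<inter> perp A)" using ab(2) p0 by (rule ssumI1)
      moreover have "b \<in> ssum A (w \<inter> perp A)" using ab(3) vec.subspace_0[OF A(1)] by (rule ssumI2)
      ultimately show "v \<in> ssum (u \<inter> ssum A (w \<inter> perp A)) (ssum A (w \<inter> perp A) \<inter> w)"
        using ab A(3) by (auto intro: ssumI)
    qed
  qed
qed

lemma uniq:
  assumes z: "z \<in> dpX TI" and z0: "ssum A (w \<inter> perp A) \<in> dpX TI"
    and A: "A \<subseteq> z" "u \<inter> z \<subseteq> A"
    and g: "z = ssum (u \<inter> z) (z \<inter> w)"
  shows "z = ssum A (w \<inter> perp A)"
proof -
  note sz = dpX_D[OF z] and sz0 = dpX_D[OF z0]
  have zs: "z \<subseteq> ssum (u \<inter> z) (z \<inter> w)" using g by (rule equalityD1)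
  have "z \<subseteq> ssum A (w \<inter> perp A)"
  proof
    fix v assume "v \<in> z"
    then have "v \<in> ssum (u \<inter> z) (z \<inter> w)" using zs by blast
    then obtain a b where ab: "v = a + b" "a \<in> u \<inter> z" "b \<in> z \<inter> w" by (rule ssumE)
    have "b \<in> perp A" unfolding perp_def using TIz[OF sz(1) sz(2)] A(1) ab(3) by blast
    then show "v \<in> ssum A (w \<inter> perp A)" using ab A(2) by (auto intro: ssumI)
  qed
  then show ?thesis using vec.subspace_dim_equal[OF sz(1) sz0(1)] sz(3) sz0(3) by auto
qed

end


context dpg begin

lemma pointwise:
  assumes u: "u \<in> dpX TI" and x: "x \<in> dpX TI" and y: "y \<in> dpX TI" and w: "w \<in> dpX TI"
    and fin: "finite (dpX TI)"
  shows "dpf TI u x w * dpf TI u y w =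
    (\<Sum>z \<in> {z \<in> dpX TI. x \<inter> y \<subseteq> z \<and> dpf TI u x z = 1 \<and> dpf TI u y z = 1}. dpf TI u z w)"
proof -
  let ?S = "{z \<in> dpX TI. x \<inter> y \<subseteq> z \<and> dpf TI u x z = 1 \<and> dpf TI u y z = 1}"
  have finS: "finite ?S" by (rule finite_subset[OF _ fin]) auto
  show ?thesis
  proof (cases "dpf TI u x w = 1 \<and> dpf TI u y w = 1")
    case False
    have "dpf TI u z w = 0" if "z \<in> ?S" for z
    proof (rule ccontr)
      assume "dpf TI u z w \<noteq> 0"
      then have fzw: "dpf TI u z w = 1" unfolding dpf_def by (simp split: if_splits)
      have z: "z \<in> dpX TI" and fxz: "dpf TI u x z = 1" and fyz: "dpf TI u y z = 1" using that by auto
      have "dpf TI u x w = 1" by (rule f_trans[OF u x z w fxz fzw])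
      moreover have "dpf TI u y w = 1" by (rule f_trans[OF u y z w fyz fzw])
      ultimately show False using False by simp
    qed
    then have "(\<Sum>z\<in>?S. dpf TI u z w) = 0" by simp
    moreover have "dpf TI u x w * dpf TI u y w = 0" using False unfolding dpf_def by auto
    ultimately show ?thesis by simp
  next
    case True
    define A where "A = u \<inter> (x \<inter> y)"
    define z0 where "z0 = ssum A (w \<inter> perp A)"
    note su = dpX_D[OF u] and sx = dpX_D[OF x] and sy = dpX_D[OF y] and sw = dpX_D[OF w]
    have gx: "u \<inter> w \<subseteq> x \<and> x = ssum (u \<inter> x) (x \<inter> w)"
      using f_char[OF u x w, THEN iffD1, OF True[THEN conjunct1]] .
    have gy: "u \<inter> w \<subseteq> y \<and> y = ssum (u \<inter> y) (y \<inter> w)"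
      using f_char[OF u y w, THEN iffD1, OF True[THEN conjunct2]] .
    have sA: "vec.subspace A" unfolding A_def using su sx sy vec.subspace_inter by blast
    have Au: "A \<subseteq> u" "A \<subseteq> x" "A \<subseteq> y" unfolding A_def by auto
    have uwA: "u \<inter> w \<subseteq> A" using gx gy unfolding A_def by auto
    have z0X: "z0 \<in> dpX TI" unfolding z0_def by (rule z0_in[OF u w sA Au(1)])
    have Uz0: "x \<inter> y \<subseteq> z0" unfolding z0_def A_def
      by (rule U_sub[OF x y u w gx[THEN conjunct1] gx[THEN conjunct2] gy[THEN conjunct1] gy[THEN conjunct2]])
    have fxz0: "dpf TI u x z0 = 1"
      using f_char[OF u x z0X, THEN iffD2] geo_z0[OF x u w gx[THEN conjunct1] gx[THEN conjunct2] sA Au(2) Au(1)]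
      unfolding z0_def by blast
    have fyz0: "dpf TI u y z0 = 1"
      using f_char[OF u y z0X, THEN iffD2] geo_z0[OF y u w gy[THEN conjunct1] gy[THEN conjunct2] sA Au(3) Au(1)]
      unfolding z0_def by blast
    have fz0w: "dpf TI u z0 w = 1"
      using f_char[OF u z0X w, THEN iffD2] geo_z0w[OF u w sA uwA Au(1) z0X[unfolded z0_def]]
      unfolding z0_def by blast
    have eq: "dpf TI u z w = (if z = z0 then 1 else 0)" if zS: "z \<in> ?S" for z
    proof (cases "dpf TI u z w = 1")
      case True
      have z: "z \<in> dpX TI" and xyz: "x \<inter> y \<subseteq> z" and fxz: "dpf TI u x z = 1" and fyz: "dpf TI u y z = 1"
        using zS by auto
      have g: "u \<inter> w \<subseteq> z \<and> z = ssum (u \<inter> z) (z \<inter> w)"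
        using f_char[OF u z w, THEN iffD1, OF True] .
      have "u \<inter> z \<subseteq> x" using f_char[OF u x z, THEN iffD1, OF fxz] by blast
      moreover have "u \<inter> z \<subseteq> y" using f_char[OF u y z, THEN iffD1, OF fyz] by blast
      ultimately have uzA: "u \<inter> z \<subseteq> A" unfolding A_def by auto
      have Az: "A \<subseteq> z" using xyz unfolding A_def by auto
      have "z = z0" unfolding z0_def by (rule uniq[OF z z0X[unfolded z0_def] Az uzA g[THEN conjunct2]])
      then show ?thesis using True by simp
    next
      case False
      then have "dpf TI u z w = 0" unfolding dpf_def by (simp split: if_splits)
      moreover have "z \<noteq> z0" using False fz0w by auto
      ultimately show ?thesis by simp
    qed
    have z0S: "z0 \<in> ?S" using z0X Uz0 fxz0 fyz0 by simp
    have "(\<Sum>z\<in>?S. dpf TI u z w) = (\<Sum>z\<in>?S. if z = z0 then 1 else 0)"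
      by (rule sum.cong) (simp_all add: eq)
    also have "\<dots> = 1" using z0S finS by simp
    finally show ?thesis using True by simp
  qed
qed

lemma S_dist:
  assumes u: "u \<in> dpX TI" and x: "x \<in> dpX TI" and y: "y \<in> dpX TI" and z: "z \<in> dpX TI"
    and xyz: "x \<inter> y \<subseteq> z" and fxz: "dpf TI u x z = 1" and fyz: "dpf TI u y z = 1"
  shows "dpdist TI u z = witt_index TI - vec.dim (u \<inter> (x \<inter> y))"
proof -
  have "u \<inter> z \<subseteq> x" using f_char[OF u x z, THEN iffD1, OF fxz] by blast
  moreover have "u \<inter> z \<subseteq> y" using f_char[OF u y z, THEN iffD1, OF fyz] by blast
  ultimately have "u \<inter> z = u \<inter> (x \<inter> y)" using xyz by auto
  then show ?thesis unfolding dpdist_def by simp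
qed

end

theorem propositionA5:
  fixes TI :: "('a::{field,finite} ^ 'n::finite) set \<Rightarrow> bool"
    and u0 x y :: "('a ^ 'n) set"
  assumes "polar_isotropy TI"
    and "u0 \<in> dpX TI" and "x \<in> dpX TI" and "y \<in> dpX TI"
  shows "(\<forall>w \<in> dpX TI. dpf TI u0 x w * dpf TI u0 y w =
            (\<Sum>z \<in> {z \<in> dpX TI. x \<inter> y \<subseteq> z \<and> dpf TI u0 x z = 1 \<and> dpf TI u0 y z = 1}.
               dpf TI u0 z w))
       \<and> (\<lambda>w. dpf TI u0 x w * dpf TI u0 y w)
           \<in> dpHom TI u0 (witt_index TI - vec.dim (u0 \<inter> (x \<inter> y)))"
proof -
  obtain P where gP: "goodP TI P" using polar_good[OF assms(1)] by blast
  interpret dpg TI P by (rule dpg.intro[OF gP])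
  have fin: "finite (dpX TI)" by (rule finite_subset[OF subset_UNIV]) simp
  let ?S = "{z \<in> dpX TI. x \<inter> y \<subseteq> z \<and> dpf TI u0 x z = 1 \<and> dpf TI u0 y z = 1}"
  let ?j = "witt_index TI - vec.dim (u0 \<inter> (x \<inter> y))"
  have pw: "\<forall>w \<in> dpX TI. dpf TI u0 x w * dpf TI u0 y w = (\<Sum>z \<in> ?S. dpf TI u0 z w)"
    using pointwise[OF assms(2,3,4) _ fin] by blast
  have Ssh: "?S \<subseteq> dpshell TI u0 ?j"
    unfolding dpshell_def using S_dist[OF assms(2,3,4)] by auto
  have finSh: "finite (dpshell TI u0 ?j)"
    by (rule finite_subset[OF _ fin]) (auto simp: dpshell_def)
  show ?thesis
  proof (intro conjI)
    show "\<forall>w \<in> dpX TI. dpf TI u0 x w * dpf TI u0 y w = (\<Sum>z \<in> ?S. dpf TI u0 z w)" by (rule pw)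
    show "(\<lambda>w. dpf TI u0 x w * dpf TI u0 y w) \<in> dpHom TI u0 ?j"
      unfolding dpHom_def
    proof (intro CollectI exI[of _ "\<lambda>z. if z \<in> ?S then 1 else 0"] ballI)
      fix w assume w: "w \<in> dpX TI"
      have "(\<Sum>z\<in>dpshell TI u0 ?j. (if z \<in> ?S then 1 else 0) * dpf TI u0 z w)
          = (\<Sum>z\<in>?S. (if z \<in> ?S then 1 else 0) * dpf TI u0 z w)"
        by (rule sum.mono_neutral_right[OF finSh Ssh]) auto
      also have "\<dots> = (\<Sum>z\<in>?S. dpf TI u0 z w)"
        by (rule sum.cong) auto
      finally show "dpf TI u0 x w * dpf TI u0 y w =
          (\<Sum>z\<in>dpshell TI u0 ?j. (if z \<in> ?S then 1 else 0) * dpf TI u0 z w)"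
        using pw w by simp
    qed
  qed
qed


end
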